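(* In the general model described in the context: (i) For every $t\in\mathbb{R}$, $\mathbb{E}\,|\widehat{\mu}(t)|^2 \ge |\widehat{\nu}(t)|^2$. (ii) For every $\gamma\ge 0$ with $\lambda^{1+2\gamma}>\frac{1}{\ell}$ there exist constants $C_1,C_2$ (independent of the random labels) such that $$\mathbb{E}\Bigl(\int_{\mathbb{R}}|\widehat{\mu}(t)|^2|t|^{2\gamma}\,dt\Bigr)\le C_1+C_2\int_{\mathbb{R}}|\widehat{\nu}(t)|^2|t|^{2\gamma}\,dt .$$
   Context: General model. Let $\ell\ge 2$ and let $T=\{1,\dots,\ell\}^*$ be the set of finite words over $\{1,\dots,\ell\}$ (the rooted $\ell$-regular tree; the root is the empty word, $|v|$ is the length of $v$, and $v|j$ is the prefix of $v$ of length $j$). Let $D\subset\mathbb{R}$ be a finite set and $\eta=\sum_{d\in D}p_d\delta_d$ a probability measure on $D$. Let $\{a_v\}_{v\in T,\,|v|\ge 1}$ be i.i.d. random variables with law $\eta$. Fix $\lambda\in(0,1)$. For $v\in T$ with $|v|=n$ put $f(v)=\sum_{j=1}^n a_{v|j}\lambda^j$, and for an infinite word $\omega\in\{1,\dots,\ell\}^{\mathbb{N}}$ put $f(\omega)=\sum_{j\ge1}a_{\omega|j}\lambda^j$. The random probability measure $\mu$ (the branching random walk with steps of size $\lambda^n$) is the image under $f$ of the uniform product measure $(\frac1\ell,\dots,\frac1\ell)^{\mathbb{N}}$ on $\{1,\dots,\ell\}^{\mathbb{N}}$; equivalently, $\mu$ is the almost sure weak limit of $\mu_n=\ell^{-n}\sum_{|v|=n}\delta_{f(v)}$.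 Let $\nu$ be the deterministic law of $\sum_{n\ge1}b_n\lambda^n$, where $b_n$ are i.i.d. with law $\eta$ (equivalently, the unique probability measure with $\nu=\sum_{d\in D}p_d\,\nu\circ F_d^{-1}$, $F_d(x)=\lambda(x+d)$). Fourier transforms are $\widehat{\rho}(t)=\int e^{itx}\,d\rho(x)$; thus $\widehat{\nu}(t)=\prod_{n\ge1}\widehat{\eta}(t\lambda^n)$. $\mathbb{E}$ denotes expectation over the random labels $\{a_v\}$. *)

theory Defs
  imports "HOL-Probability.Probability"
begin

text \<open>Infinite words over {1..l} are functions w :: nat => nat (letter j is w j);
  the prefix of length j is the list map w [0..<j]. Finite words are nat lists.
  A labelling is a function a :: nat list => real (label a v of vertex v).\<close>

definition bfval :: "real \<Rightarrow> (nat list \<Rightarrow> real) \<Rightarrow> (nat \<Rightarrow> nat) \<Rightarrow> real" where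
  "bfval lam a w = (\<Sum>j. a (map w [0..<Suc j]) * lam ^ Suc j)"

definition word_measure :: "nat \<Rightarrow> (nat \<Rightarrow> nat) measure" where
  "word_measure l = PiM UNIV (\<lambda>_. measure_pmf (pmf_of_set {1..l}))"

definition bmu :: "nat \<Rightarrow> real \<Rightarrow> (nat list \<Rightarrow> real) \<Rightarrow> real measure" where
  "bmu l lam a = distr (word_measure l) borel (bfval lam a)"

definition label_space :: "real pmf \<Rightarrow> (nat list \<Rightarrow> real) measure" where
  "label_space eta = PiM UNIV (\<lambda>_. measure_pmf eta)"

text \<open>nu = law of sum_{n>=1} b_n lam^n, b_n i.i.d. with law eta (b_n stored as b (n-1))\<close>
definition bnu :: "real pmf \<Rightarrow> real \<Rightarrow> real measure" where
  "bnu eta lam = distr (PiM (UNIV :: nat set) (\<lambda>_. measure_pmf eta)) borel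
                   (\<lambda>b. \<Sum>n. b n * lam ^ Suc n)"

end

theory Submission
  imports Defs
begin

lemma meas_prefix[measurable]:
  "(\<lambda>w. map w [0..<n]) \<in> measurable (PiM (UNIV::nat set) (\<lambda>_. measure_pmf p)) (count_space UNIV)"
  for p :: "nat pmf"
proof (induction n)
  case 0 then show ?case by simp
next
  case (Suc n)
  have c: "(\<lambda>w. w n) \<in> measurable (PiM (UNIV::nat set) (\<lambda>_. measure_pmf p)) (count_space UNIV)"
    by measurable
  have d: "(\<lambda>w. xs @ [w n]) \<in> measurable (PiM (UNIV::nat set) (\<lambda>_. measure_pmf p)) (count_space UNIV)" for xs
      using measurable_compose[OF c, of "\<lambda>x. xs @ [x]" "count_space UNIV"] by simp
  have "(\<lambda>w. (\<lambda>xs w. xs @ [w n]) (map w [0..<n]) w) \<in> measurable (PiM (UNIV::nat set) (\<lambda>_. measure_pmf p)) (count_space UNIV)"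
    by (rule measurable_compose_countable[where g="\<lambda>w. map w [0..<n]", OF d Suc])
  then show ?case by simp
qed

lemma meas_pmf_borel: "(\<lambda>x. x) \<in> measurable (measure_pmf (eta::real pmf)) borel"
  by (simp add: measurable_cong_sets[OF sets_measure_pmf_count_space refl])

lemma meas_label[measurable]:
  "(\<lambda>a. a v) \<in> borel_measurable (PiM (UNIV::'i set) (\<lambda>_. measure_pmf (eta::real pmf)))"
  using measurable_compose[OF measurable_component_singleton[of v UNIV "\<lambda>_. measure_pmf eta"] meas_pmf_borel]
  by simp

lemma meas_bfval:
  "(\<lambda>(a,w). bfval lam a w) \<in> borel_measurable (label_space eta \<Otimes>\<^sub>M word_measure l)"
  unfolding bfval_def label_space_def word_measure_def split_beta'
proof (rule borel_measurable_suminf)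
  fix j
  show "(\<lambda>x. fst x (map (snd x) [0..<Suc j]) * lam ^ Suc j) \<in> borel_measurable
        (PiM UNIV (\<lambda>_. measure_pmf eta) \<Otimes>\<^sub>M PiM UNIV (\<lambda>_. measure_pmf (pmf_of_set {1..l})))"
    apply (rule borel_measurable_times)
     apply (rule measurable_compose_countable[where f="\<lambda>v x. fst x v" and g="\<lambda>x. map (snd x) [0..<Suc j]"])
    by measurable
qed

lemma meas_bfval'[measurable]:
  assumes "A \<in> measurable N (label_space eta)" "Wf \<in> measurable N (word_measure l)"
  shows "(\<lambda>x. bfval lam (A x) (Wf x)) \<in> borel_measurable N"
  using measurable_compose[OF measurable_Pair[OF assms] meas_bfval] by simp

lemma meas_bfval_a[measurable]:
  "(\<lambda>a. bfval lam a w) \<in> borel_measurable (label_space eta)"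
  unfolding bfval_def label_space_def by measurable

lemma meas_bfval_w[measurable]:
  "(\<lambda>w. bfval lam a w) \<in> borel_measurable (word_measure l)"
  using measurable_compose[OF measurable_Pair[OF measurable_const[of a] measurable_ident] meas_bfval[of lam eta l]]
  by (simp add: label_space_def space_PiM)

lemma meas_S[measurable]:
  "(\<lambda>b. \<Sum>n. b n * lam ^ Suc n) \<in> borel_measurable (PiM (UNIV::nat set) (\<lambda>_. measure_pmf (eta::real pmf)))"
  by measurable

definition Sf :: "real \<Rightarrow> (nat \<Rightarrow> real) \<Rightarrow> real" where
  "Sf lam b = (\<Sum>n. b n * lam ^ Suc n)"

lemma meas_Sf[measurable]:
  "Sf lam \<in> borel_measurable (PiM (UNIV::nat set) (\<lambda>_. measure_pmf (eta::real pmf)))"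
  unfolding Sf_def by measurable

lemma bnu_Sf: "bnu eta lam = distr (PiM (UNIV::nat set) (\<lambda>_. measure_pmf eta)) borel (Sf lam)"
  unfolding bnu_def Sf_def ..

lemma bfval_Sf: "bfval lam a w = Sf lam (\<lambda>j. a (map w [0..<Suc j]))"
  unfolding bfval_def Sf_def ..

lemma prob_L: "prob_space (label_space eta)"
  unfolding label_space_def by (intro prob_space_PiM prob_space_measure_pmf)

lemma prob_W: "prob_space (word_measure l)"
  unfolding word_measure_def by (intro prob_space_PiM prob_space_measure_pmf)

lemma prob_PiM_nat: "prob_space (PiM (UNIV::nat set) (\<lambda>_. measure_pmf (eta::real pmf)))"
  by (intro prob_space_PiM prob_space_measure_pmf)

lemma prob_bnu: "prob_space (bnu eta lam)"
  unfolding bnu_Sf by (intro prob_space.prob_space_distr prob_PiM_nat meas_Sf)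

lemma dist_reindex:
  assumes "inj P"
  shows "distr (label_space eta) (PiM (UNIV::nat set) (\<lambda>_. measure_pmf eta)) (\<lambda>a n. a (P n))
       = PiM (UNIV::nat set) (\<lambda>_. measure_pmf eta)"
  using distr_PiM_reindex[of UNIV "\<lambda>_. measure_pmf eta" P UNIV] assms
  unfolding label_space_def by (simp add: restrict_def prob_space_measure_pmf)

lemma meas_reindex[measurable]:
  "(\<lambda>a n. a (P n)) \<in> measurable (label_space eta) (PiM (UNIV::nat set) (\<lambda>_. measure_pmf eta))"
  unfolding label_space_def
  by (rule measurable_PiM_single') (auto simp: space_PiM)

lemma int_iexp_bnu: "complex_integrable (bnu eta lam) (\<lambda>x. exp (\<i> * (complex_of_real c * complex_of_real x)))"
proof -
  have m: "(\<lambda>x. exp (\<i> * (complex_of_real c * complex_of_real x))) \<in> borel_measurable (bnu eta lam)"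
    unfolding bnu_Sf measurable_cong_sets[OF sets_distr refl] by measurable
  show ?thesis
    by (rule finite_measure.integrable_const_bound[OF prob_space.finite_measure[OF prob_bnu] _ m, where B=1])
       (simp add: norm_exp_i_times[of "c * x" for x, simplified])
qed

lemma distX:
  assumes "inj P"
  shows "distr (label_space eta) borel (\<lambda>a. Sf lam (\<lambda>n. a (P n))) = bnu eta lam"
proof -
  have "distr (label_space eta) borel (\<lambda>a. Sf lam (\<lambda>n. a (P n))) =
    distr (distr (label_space eta) (PiM (UNIV::nat set) (\<lambda>_. measure_pmf eta)) (\<lambda>a n. a (P n))) borel (Sf lam)"
    by (subst distr_distr) (auto simp: comp_def)
  also have "\<dots> = bnu eta lam" unfolding dist_reindex[OF assms] bnu_Sf ..
  finally show ?thesis .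
qed

lemma EX_cos:
  assumes "inj P"
  shows "(\<integral>a. cos (c * Sf lam (\<lambda>n. a (P n))) \<partial>label_space eta) = Re (char (bnu eta lam) c)"
proof -
  have "(\<integral>a. cos (c * Sf lam (\<lambda>n. a (P n))) \<partial>label_space eta) = (\<integral>x. cos (c * x) \<partial>bnu eta lam)"
    unfolding distX[OF assms, symmetric] by (subst integral_distr) auto
  also have "\<dots> = Re (char (bnu eta lam) c)"
    unfolding char_def
    by (subst integral_Re[symmetric]) (auto simp: Re_exp int_iexp_bnu intro!: integral_cong)
  finally show ?thesis .
qed

lemma EX_sin:
  assumes "inj P"
  shows "(\<integral>a. sin (c * Sf lam (\<lambda>n. a (P n))) \<partial>label_space eta) = Im (char (bnu eta lam) c)"
proof -
  have "(\<integral>a. sin (c * Sf lam (\<lambda>n. a (P n))) \<partial>label_space eta) = (\<integral>x. sin (c * x) \<partial>bnu eta lam)"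
    unfolding distX[OF assms, symmetric] by (subst integral_distr) auto
  also have "\<dots> = Im (char (bnu eta lam) c)"
    unfolding char_def
    by (subst integral_Im[symmetric]) (auto simp: Im_exp int_iexp_bnu intro!: integral_cong)
  finally show ?thesis .
qed

lemma indep_coords:
  "prob_space.indep_vars (label_space eta) (\<lambda>_. measure_pmf eta) (\<lambda>v a. a v) UNIV"
proof -
  interpret L: prob_space "label_space eta" by (rule prob_L)
  have rv: "\<And>i. L.random_variable (measure_pmf eta) (\<lambda>a. a i)"
    unfolding label_space_def by measurable
  have "distr (label_space eta) (PiM UNIV (\<lambda>_. measure_pmf eta)) (\<lambda>x. \<lambda>i\<in>UNIV. x i)
      = PiM UNIV (\<lambda>i. distr (label_space eta) (measure_pmf eta) (\<lambda>x. x i))"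
  proof -
    have d: "distr (label_space eta) (measure_pmf eta) (\<lambda>x. x i) = measure_pmf eta" for i
      unfolding label_space_def by (rule distr_PiM_component) (auto simp: prob_space_measure_pmf)
    have "distr (label_space eta) (PiM UNIV (\<lambda>_. measure_pmf eta)) (\<lambda>x. x) = label_space eta"
      unfolding label_space_def by (rule distr_id2) simp
    moreover have r: "(\<lambda>x::nat list \<Rightarrow> real. \<lambda>i\<in>UNIV. x i) = (\<lambda>x. x)" by (simp add: restrict_def)
    ultimately show ?thesis unfolding d r by (simp add: label_space_def)
  qed
  then show ?thesis
    using L.indep_vars_iff_distr_eq_PiM[where I=UNIV and M'="\<lambda>_. measure_pmf eta" and X="\<lambda>v a. a v", OF _ rv] by simp
qed

lemma meas_sub_reindex:
  assumes "range P \<subseteq> A"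
  shows "(\<lambda>r n. r (P n)) \<in> measurable (PiM A (\<lambda>_. measure_pmf (eta::real pmf))) (PiM (UNIV::nat set) (\<lambda>_. measure_pmf eta))"
proof (rule measurable_PiM_single')
  fix n :: nat
  have "P n \<in> A" using assms by auto
  then show "(\<lambda>r. r (P n)) \<in> measurable (PiM A (\<lambda>_. measure_pmf (eta::real pmf))) (measure_pmf eta)"
    by (rule measurable_component_singleton)
qed (use assms in \<open>auto simp: space_PiM\<close>)

lemma indep_XY:
  assumes "range P \<inter> range Q = {}"
  shows "prob_space.indep_var (label_space eta) borel (\<lambda>a. Sf lam (\<lambda>n. a (P n))) borel (\<lambda>a. Sf lam (\<lambda>n. a (Q n)))"
proof -
  interpret L: prob_space "label_space eta" by (rule prob_L)
  have i: "L.indep_var (PiM (range P) (\<lambda>_. measure_pmf eta)) (\<lambda>\<omega>. restrict (\<lambda>i. \<omega> i) (range P))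
     (PiM (range Q) (\<lambda>_. measure_pmf eta)) (\<lambda>\<omega>. restrict (\<lambda>i. \<omega> i) (range Q))"
    using L.indep_var_restrict[OF indep_coords assms] by simp
  have m1: "(\<lambda>r. Sf lam (\<lambda>n. r (P n))) \<in> borel_measurable (PiM (range P) (\<lambda>_. measure_pmf eta))"
    using measurable_compose[OF meas_sub_reindex[of P "range P" eta] meas_Sf] by simp
  have m2: "(\<lambda>r. Sf lam (\<lambda>n. r (Q n))) \<in> borel_measurable (PiM (range Q) (\<lambda>_. measure_pmf eta))"
    using measurable_compose[OF meas_sub_reindex[of Q "range Q" eta] meas_Sf] by simp
  from L.indep_var_compose[OF i m1 m2] show ?thesis by (simp add: comp_def)
qed

lemma AE_good: "AE a in label_space eta. \<forall>v. a v \<in> set_pmf eta"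
  unfolding label_space_def AE_all_countable
  by (intro allI AE_PiM_component) (auto simp: prob_space_measure_pmf AE_measure_pmf)

lemma summ_bdd:
  fixes b :: "nat \<Rightarrow> real"
  assumes "\<And>n. \<bar>b n\<bar> \<le> B" "0 < lam" "lam < 1"
  shows "summable (\<lambda>n. b n * lam ^ Suc n)"
proof (rule summable_comparison_test[where g="\<lambda>n. B * lam ^ Suc n"])
  show "\<exists>N. \<forall>n\<ge>N. norm (b n * lam ^ Suc n) \<le> B * lam ^ Suc n"
    using assms by (auto simp: abs_mult intro!: mult_right_mono)
  have "summable (\<lambda>n. lam ^ n)" using assms by (intro summable_geometric) auto
  then show "summable (\<lambda>n. B * lam ^ Suc n)"
    by (intro summable_mult) (simp add: summable_mult)
qed

definition bndB :: "real pmf \<Rightarrow> real" where "bndB eta = (\<Sum>x\<in>set_pmf eta. \<bar>x\<bar>)"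

lemma good_bnd:
  assumes "finite (set_pmf eta)" "a v \<in> set_pmf eta"
  shows "\<bar>a v\<bar> \<le> bndB eta"
  unfolding bndB_def using member_le_sum[OF assms(2), of abs] assms(1) by simp

lemma bfval_split:
  assumes "\<And>v. \<bar>a v\<bar> \<le> B" "0 < lam" "lam < 1"
  shows "bfval lam a w = lam ^ k * Sf lam (\<lambda>n. a (map w [0..<Suc (n + k)]))
           + (\<Sum>i<k. a (map w [0..<Suc i]) * lam ^ Suc i)"
proof -
  let ?T = "\<lambda>j. a (map w [0..<Suc j]) * lam ^ Suc j"
  have sT: "summable ?T" by (rule summ_bdd[OF assms])
  have sP: "summable (\<lambda>n. a (map w [0..<Suc (n + k)]) * lam ^ Suc n)" by (rule summ_bdd[OF assms])
  have "bfval lam a w = (\<Sum>n. ?T (n + k)) + (\<Sum>i<k. ?T i)"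
    unfolding bfval_def by (rule suminf_split_initial_segment[OF sT])
  also have "(\<Sum>n. ?T (n + k)) = (\<Sum>n. a (map w [0..<Suc (n + k)]) * lam ^ Suc n * lam ^ k)"
    by (simp add: power_add mult_ac)
  also have "\<dots> = (\<Sum>n. a (map w [0..<Suc (n + k)]) * lam ^ Suc n) * lam ^ k"
    by (rule suminf_mult2[OF sP, symmetric])
  finally show ?thesis unfolding Sf_def by (simp add: mult_ac)
qed

lemma int_bdd1:
  fixes f :: "'a \<Rightarrow> real"
  assumes "prob_space M" "f \<in> borel_measurable M" "\<And>x. \<bar>f x\<bar> \<le> 1"
  shows "integrable M f"
  by (rule finite_measure.integrable_const_bound[OF prob_space.finite_measure[OF assms(1)] _ assms(2), where B=1])
     (use assms(3) in auto)

lemma meas_X[measurable]: "(\<lambda>a. Sf lam (\<lambda>n. a (P n))) \<in> borel_measurable (label_space eta)"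
  using measurable_compose[OF meas_reindex meas_Sf] by simp

lemma pair_formula:
  assumes k: "\<forall>i<k. w i = w' i" "w k \<noteq> w' k" and lam: "0 < lam" "lam < 1"
    and fin: "finite (set_pmf eta)"
  shows "(\<integral>a. cos (t * (bfval lam a w - bfval lam a w')) \<partial>label_space eta)
         = (cmod (char (bnu eta lam) (t * lam ^ k)))\<^sup>2"
proof -
  interpret L: prob_space "label_space eta" by (rule prob_L)
  define P where "P n = map w [0..<Suc (n + k)]" for n
  define Q where "Q n = map w' [0..<Suc (n + k)]" for n
  define c where "c = t * lam ^ k"
  have injP: "inj P" unfolding P_def by (rule injI) (drule arg_cong[where f=length], simp)
  have injQ: "inj Q" unfolding Q_def by (rule injI) (drule arg_cong[where f=length], simp)
  have disj: "range P \<inter> range Q = {}"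
  proof (safe)
    fix n m assume "P n = Q m"
    then have "length (P n) = length (Q m)" "P n ! k = Q m ! k" by simp_all
    then show "P n \<in> {}" using k(2) unfolding P_def Q_def by (simp del: upt_Suc add: nth_map_upt)
  qed
  have pre: "(\<Sum>i<k. a (map w [0..<Suc i]) * lam ^ Suc i) = (\<Sum>i<k. a (map w' [0..<Suc i]) * lam ^ Suc i)" for a
  proof (intro sum.cong refl)
    fix i assume "i \<in> {..<k}"
    then have "map w [0..<Suc i] = map w' [0..<Suc i]"
      using k(1) by (intro map_cong refl) auto
    then show "a (map w [0..<Suc i]) * lam ^ Suc i = a (map w' [0..<Suc i]) * lam ^ Suc i" by (simp only:)
  qed
  let ?X = "\<lambda>a. Sf lam (\<lambda>n. a (P n))"
  let ?Y = "\<lambda>a. Sf lam (\<lambda>n. a (Q n))"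
  have ae: "AE a in label_space eta. cos (t * (bfval lam a w - bfval lam a w'))
      = cos (c * ?X a) * cos (c * ?Y a) + sin (c * ?X a) * sin (c * ?Y a)"
    using AE_good
  proof eventually_elim
    case (elim a)
    have b: "\<And>v. \<bar>a v\<bar> \<le> bndB eta" using elim by (simp add: good_bnd[OF fin])
    have "bfval lam a w - bfval lam a w' = lam ^ k * (?X a - ?Y a)"
      unfolding bfval_split[OF b lam, where w=w and k=k] bfval_split[OF b lam, where w=w' and k=k] pre P_def Q_def
      by (simp add: algebra_simps)
    then have "t * (bfval lam a w - bfval lam a w') = t * (lam ^ k * (?X a - ?Y a))" by (rule arg_cong)
    also have "\<dots> = c * ?X a - c * ?Y a" unfolding c_def by (simp add: algebra_simps)
    finally have e: "t * (bfval lam a w - bfval lam a w') = c * ?X a - c * ?Y a" .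
    show ?case unfolding e by (simp add: cos_diff)
  qed
  have ind: "L.indep_var borel ?X borel ?Y" by (rule indep_XY[OF disj])
  have indc: "L.indep_var borel (\<lambda>a. cos (c * ?X a)) borel (\<lambda>a. cos (c * ?Y a))"
    using L.indep_var_compose[OF ind, of "\<lambda>x. cos (c * x)" borel "\<lambda>x. cos (c * x)" borel]
    by (simp add: comp_def)
  have inds: "L.indep_var borel (\<lambda>a. sin (c * ?X a)) borel (\<lambda>a. sin (c * ?Y a))"
    using L.indep_var_compose[OF ind, of "\<lambda>x. sin (c * x)" borel "\<lambda>x. sin (c * x)" borel]
    by (simp add: comp_def)
  have i1: "integrable (label_space eta) (\<lambda>a. cos (c * Sf lam (\<lambda>n. a (R n))))" for R
    by (rule int_bdd1[OF prob_L]) auto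
  have i2: "integrable (label_space eta) (\<lambda>a. sin (c * Sf lam (\<lambda>n. a (R n))))" for R
    by (rule int_bdd1[OF prob_L]) auto
  have "(\<integral>a. cos (t * (bfval lam a w - bfval lam a w')) \<partial>label_space eta)
      = (\<integral>a. cos (c * ?X a) * cos (c * ?Y a) + sin (c * ?X a) * sin (c * ?Y a) \<partial>label_space eta)"
    by (rule integral_cong_AE[OF _ _ ae]) auto
  also have "\<dots> = (\<integral>a. cos (c * ?X a) * cos (c * ?Y a) \<partial>label_space eta)
                 + (\<integral>a. sin (c * ?X a) * sin (c * ?Y a) \<partial>label_space eta)"
    by (rule Bochner_Integration.integral_add[OF L.indep_var_integrable[OF indc i1 i1] L.indep_var_integrable[OF inds i2 i2]])
  also have "\<dots> = Re (char (bnu eta lam) c) * Re (char (bnu eta lam) c) + Im (char (bnu eta lam) c) * Im (char (bnu eta lam) c)"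
    by (simp add: L.indep_var_lebesgue_integral[OF indc i1 i1] L.indep_var_lebesgue_integral[OF inds i2 i2]
         EX_cos[OF injP] EX_cos[OF injQ] EX_sin[OF injP] EX_sin[OF injQ])
  also have "\<dots> = (cmod (char (bnu eta lam) c))\<^sup>2"
    using cmod_power2[of "char (bnu eta lam) c"] by (simp add: power2_eq_square)
  finally show ?thesis unfolding c_def .
qed

lemma sf_W: "sigma_finite_measure (word_measure l)"
  using prob_W by (rule prob_space_imp_sigma_finite)
lemma sf_L: "sigma_finite_measure (label_space eta)"
  using prob_L by (rule prob_space_imp_sigma_finite)

lemma int_iexp_W: "complex_integrable (word_measure l) (\<lambda>w. exp (\<i> * (complex_of_real t * complex_of_real (bfval lam a w))))"
  by (rule finite_measure.integrable_const_bound[OF prob_space.finite_measure[OF prob_W], where B=1])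
     (simp_all add: norm_exp_i_times[of "t * x" for x, simplified])

lemma char_bmu: "char (bmu l lam a) t = (\<integral>w. exp (\<i> * (complex_of_real t * complex_of_real (bfval lam a w))) \<partial>word_measure l)"
  unfolding char_def bmu_def by (subst integral_distr) auto

lemma cmod_char_bmu:
  "(cmod (char (bmu l lam a) t))\<^sup>2 = (\<integral>w. cos (t * bfval lam a w) \<partial>word_measure l)\<^sup>2
       + (\<integral>w. sin (t * bfval lam a w) \<partial>word_measure l)\<^sup>2"
proof -
  have "Re (char (bmu l lam a) t) = (\<integral>w. cos (t * bfval lam a w) \<partial>word_measure l)"
    unfolding char_bmu by (subst integral_Re[symmetric]) (auto simp: Re_exp int_iexp_W intro!: integral_cong)
  moreover have "Im (char (bmu l lam a) t) = (\<integral>w. sin (t * bfval lam a w) \<partial>word_measure l)"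
    unfolding char_bmu by (subst integral_Im[symmetric]) (auto simp: Im_exp int_iexp_W intro!: integral_cong)
  ultimately show ?thesis by (simp add: cmod_power2)
qed

lemma jensen_sq:
  fixes f :: "'a \<Rightarrow> real"
  assumes "prob_space M" "integrable M f" "integrable M (\<lambda>x. (f x)\<^sup>2)"
  shows "(integral\<^sup>L M f)\<^sup>2 \<le> (\<integral>x. (f x)\<^sup>2 \<partial>M)"
  using prob_space.variance_positive[OF assms(1), of f] prob_space.variance_eq[OF assms] by simp

lemma inj_prefix: "inj (\<lambda>n. map (w::nat\<Rightarrow>nat) [0..<Suc (n + k)])"
  by (rule injI) (drule arg_cong[where f=length], simp)

lemma E_cos_W:
  "(\<integral>a. (\<integral>w. cos (t * bfval lam a w) \<partial>word_measure l) \<partial>label_space eta) = Re (char (bnu eta lam) t)"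
proof -
  interpret pair_sigma_finite "word_measure l" "label_space eta"
    by (simp add: pair_sigma_finite_def sf_W sf_L)
  have "(\<integral>a. (\<integral>w. cos (t * bfval lam a w) \<partial>word_measure l) \<partial>label_space eta)
      = (\<integral>w. (\<integral>a. cos (t * bfval lam a w) \<partial>label_space eta) \<partial>word_measure l)"
    by (rule Fubini_integral, rule int_bdd1[OF prob_space_pair[OF prob_W prob_L]]) auto
  also have "\<dots> = (\<integral>w. Re (char (bnu eta lam) t) \<partial>word_measure l)"
    using EX_cos[OF inj_prefix[of _ 0]] by (simp add: bfval_Sf)
  also have "\<dots> = Re (char (bnu eta lam) t)" using prob_space.prob_space[OF prob_W] by simp
  finally show ?thesis .
qed

lemma E_sin_W:
  "(\<integral>a. (\<integral>w. sin (t * bfval lam a w) \<partial>word_measure l) \<partial>label_space eta) = Im (char (bnu eta lam) t)"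
proof -
  interpret pair_sigma_finite "word_measure l" "label_space eta"
    by (simp add: pair_sigma_finite_def sf_W sf_L)
  have "(\<integral>a. (\<integral>w. sin (t * bfval lam a w) \<partial>word_measure l) \<partial>label_space eta)
      = (\<integral>w. (\<integral>a. sin (t * bfval lam a w) \<partial>label_space eta) \<partial>word_measure l)"
    by (rule Fubini_integral, rule int_bdd1[OF prob_space_pair[OF prob_W prob_L]]) auto
  also have "\<dots> = (\<integral>w. Im (char (bnu eta lam) t) \<partial>word_measure l)"
    using EX_sin[OF inj_prefix[of _ 0]] by (simp add: bfval_Sf)
  also have "\<dots> = Im (char (bnu eta lam) t)" using prob_space.prob_space[OF prob_W] by simp
  finally show ?thesis .
qed

lemma meas_C[measurable]: "(\<lambda>a. \<integral>w. cos (t * bfval lam a w) \<partial>word_measure l) \<in> borel_measurable (label_space eta)"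
  by (rule sigma_finite_measure.borel_measurable_lebesgue_integral[OF sf_W]) auto
lemma meas_Sn[measurable]: "(\<lambda>a. \<integral>w. sin (t * bfval lam a w) \<partial>word_measure l) \<in> borel_measurable (label_space eta)"
  by (rule sigma_finite_measure.borel_measurable_lebesgue_integral[OF sf_W]) auto

lemma abs_int_le1:
  fixes f :: "'a \<Rightarrow> real"
  assumes "prob_space M" "\<And>x. \<bar>f x\<bar> \<le> 1"
  shows "\<bar>integral\<^sup>L M f\<bar> \<le> 1"
proof -
  have "\<bar>integral\<^sup>L M f\<bar> \<le> (\<integral>x. \<bar>f x\<bar> \<partial>M)" by (rule integral_abs_bound)
  also have "\<dots> \<le> (\<integral>x. 1 \<partial>M)"
    using assms by (intro integral_mono') (auto intro: finite_measure.integrable_const[OF prob_space.finite_measure[OF assms(1)]])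
  also have "\<dots> = 1" using prob_space.prob_space[OF assms(1)] by simp
  finally show ?thesis .
qed

lemma part_i:
  "(\<integral>a. (cmod (char (bmu l lam a) t))\<^sup>2 \<partial>label_space eta) \<ge> (cmod (char (bnu eta lam) t))\<^sup>2"
proof -
  let ?C = "\<lambda>a. \<integral>w. cos (t * bfval lam a w) \<partial>word_measure l"
  let ?S = "\<lambda>a. \<integral>w. sin (t * bfval lam a w) \<partial>word_measure l"
  have bC: "\<bar>?C a\<bar> \<le> 1" for a by (rule abs_int_le1[OF prob_W]) simp
  have bS: "\<bar>?S a\<bar> \<le> 1" for a by (rule abs_int_le1[OF prob_W]) simp
  have iC: "integrable (label_space eta) ?C" by (rule int_bdd1[OF prob_L]) (auto intro: bC)
  have iS: "integrable (label_space eta) ?S" by (rule int_bdd1[OF prob_L]) (auto intro: bS)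
  have iC2: "integrable (label_space eta) (\<lambda>a. (?C a)\<^sup>2)"
    by (rule int_bdd1[OF prob_L]) (auto simp: abs_square_le_1 intro: bC)
  have iS2: "integrable (label_space eta) (\<lambda>a. (?S a)\<^sup>2)"
    by (rule int_bdd1[OF prob_L]) (auto simp: abs_square_le_1 intro: bS)
  have "(cmod (char (bnu eta lam) t))\<^sup>2 = (integral\<^sup>L (label_space eta) ?C)\<^sup>2 + (integral\<^sup>L (label_space eta) ?S)\<^sup>2"
    by (simp add: cmod_power2 E_cos_W E_sin_W)
  also have "\<dots> \<le> (\<integral>a. (?C a)\<^sup>2 \<partial>label_space eta) + (\<integral>a. (?S a)\<^sup>2 \<partial>label_space eta)"
    by (intro add_mono jensen_sq[OF prob_L] iC iS iC2 iS2)
  also have "\<dots> = (\<integral>a. (?C a)\<^sup>2 + (?S a)\<^sup>2 \<partial>label_space eta)"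
    by (rule Bochner_Integration.integral_add[OF iC2 iS2, symmetric])
  also have "\<dots> = (\<integral>a. (cmod (char (bmu l lam a) t))\<^sup>2 \<partial>label_space eta)"
    by (simp add: cmod_char_bmu)
  finally show ?thesis .
qed


definition Aset :: "nat \<Rightarrow> ((nat\<Rightarrow>nat) \<times> (nat\<Rightarrow>nat)) set" where
  "Aset k = {p. \<forall>i<k. fst p i = snd p i}"

lemma space_W: "space (word_measure l) = UNIV"
  unfolding word_measure_def by (simp add: space_PiM)

lemma space_WW: "space (word_measure l \<Otimes>\<^sub>M word_measure l) = UNIV"
  by (simp add: space_pair_measure space_W)

lemma comp_sets:
  "{p \<in> space (word_measure l \<Otimes>\<^sub>M word_measure l). fst p i = n} \<in> sets (word_measure l \<Otimes>\<^sub>M word_measure l)"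
  "{p \<in> space (word_measure l \<Otimes>\<^sub>M word_measure l). snd p i = n} \<in> sets (word_measure l \<Otimes>\<^sub>M word_measure l)"
proof -
  have c: "(\<lambda>w. w i) \<in> measurable (word_measure l) (count_space UNIV)"
    unfolding word_measure_def by measurable
  have m1: "(\<lambda>p. fst p i) \<in> measurable (word_measure l \<Otimes>\<^sub>M word_measure l) (count_space UNIV)"
    using measurable_compose[OF measurable_fst[of "word_measure l" "word_measure l"] c] by simp
  have m2: "(\<lambda>p. snd p i) \<in> measurable (word_measure l \<Otimes>\<^sub>M word_measure l) (count_space UNIV)"
    using measurable_compose[OF measurable_snd[of "word_measure l" "word_measure l"] c] by simp
  have "(\<lambda>p. fst p i) -` {n} \<inter> space (word_measure l \<Otimes>\<^sub>M word_measure l) \<in> sets (word_measure l \<Otimes>\<^sub>M word_measure l)"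
    by (rule measurable_sets[OF m1]) simp
  then show "{p \<in> space (word_measure l \<Otimes>\<^sub>M word_measure l). fst p i = n} \<in> sets (word_measure l \<Otimes>\<^sub>M word_measure l)"
    by (simp add: vimage_def Int_def conj_commute)
  have "(\<lambda>p. snd p i) -` {n} \<inter> space (word_measure l \<Otimes>\<^sub>M word_measure l) \<in> sets (word_measure l \<Otimes>\<^sub>M word_measure l)"
    by (rule measurable_sets[OF m2]) simp
  then show "{p \<in> space (word_measure l \<Otimes>\<^sub>M word_measure l). snd p i = n} \<in> sets (word_measure l \<Otimes>\<^sub>M word_measure l)"
    by (simp add: vimage_def Int_def conj_commute)
qed

lemma Aset_sets: "Aset k \<in> sets (word_measure l \<Otimes>\<^sub>M word_measure l)"
proof -
  let ?WW = "word_measure l \<Otimes>\<^sub>M word_measure l"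
  have e: "{p \<in> space ?WW. fst p i = snd p i} = (\<Union>n. {p \<in> space ?WW. fst p i = n} \<inter> {p \<in> space ?WW. snd p i = n})" for i
    by auto
  have s: "{p \<in> space ?WW. fst p i = snd p i} \<in> sets ?WW" for i
    unfolding e by (rule sets.countable_UN) (auto intro!: sets.Int comp_sets)
  have "(\<Inter>i\<in>{..<k}. {p \<in> space ?WW. fst p i = snd p i}) \<in> sets ?WW"
    by (rule sets.countable_INT'') (auto simp: s sets.top[of ?WW, unfolded space_WW])
  moreover have "Aset k = (\<Inter>i\<in>{..<k}. {p \<in> space ?WW. fst p i = snd p i})"
    by (auto simp: Aset_def space_WW)
  ultimately show ?thesis by simp
qed

lemma Aset_bound:
  assumes "l \<ge> 1"
  shows "emeasure (word_measure l \<Otimes>\<^sub>M word_measure l) (Aset k) \<le> ennreal ((1 / real l) ^ k)"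
proof -
  interpret W: prob_space "word_measure l" by (rule prob_W)
  have "emeasure (word_measure l \<Otimes>\<^sub>M word_measure l) (Aset k)
      = (\<integral>\<^sup>+w. emeasure (word_measure l) (Pair w -` Aset k) \<partial>word_measure l)"
    by (rule W.emeasure_pair_measure_alt[OF Aset_sets])
  also have "\<dots> \<le> (\<integral>\<^sup>+w. ennreal ((1 / real l) ^ k) \<partial>word_measure l)"
  proof (rule nn_integral_mono)
    fix w :: "nat \<Rightarrow> nat"
    have e: "Pair w -` Aset k = prod_emb UNIV (\<lambda>_. measure_pmf (pmf_of_set {1..l})) {..<k} (PiE {..<k} (\<lambda>i. {w i}))"
    proof -
      have sp: "space (PiM UNIV (\<lambda>_. measure_pmf (pmf_of_set {1..l}))) = (UNIV :: (nat \<Rightarrow> nat) set)"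
        using space_W[of l] unfolding word_measure_def .
      show ?thesis
      proof (rule set_eqI)
        fix x :: "nat \<Rightarrow> nat"
        have 1: "x \<in> Pair w -` Aset k \<longleftrightarrow> (\<forall>i<k. w i = x i)" by (simp add: Aset_def)
        have 2: "x \<in> prod_emb UNIV (\<lambda>_. measure_pmf (pmf_of_set {1..l})) {..<k} (PiE {..<k} (\<lambda>i. {w i}))
           \<longleftrightarrow> (\<forall>i\<in>{..<k}. x i \<in> {w i})"
          unfolding prod_emb_def sp by (simp only: vimage_eq Int_iff restrict_PiE_iff UNIV_I simp_thms space_measure_pmf PiE_UNIV)
        show "x \<in> Pair w -` Aset k \<longleftrightarrow> x \<in> prod_emb UNIV (\<lambda>_. measure_pmf (pmf_of_set {1..l})) {..<k} (PiE {..<k} (\<lambda>i. {w i}))"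
          unfolding 1 2
        proof
          assume h: "\<forall>i<k. w i = x i"
          show "\<forall>i\<in>{..<k}. x i \<in> {w i}"
          proof
            fix i assume "i \<in> {..<k}"
            then have "i < k" by simp
            from mp[OF spec[OF h, of i] this] show "x i \<in> {w i}" by simp
          qed
        next
          assume h: "\<forall>i\<in>{..<k}. x i \<in> {w i}"
          show "\<forall>i<k. w i = x i"
          proof (intro allI impI)
            fix i assume "i < k"
            then have "i \<in> {..<k}" by simp
            from bspec[OF h this] show "w i = x i" by simp
          qed
        qed
      qed
    qed
    have "emeasure (word_measure l) (Pair w -` Aset k) = (\<Prod>i<k. emeasure (measure_pmf (pmf_of_set {1..l})) {w i})"
      unfolding e word_measure_def by (rule emeasure_PiM_emb) (auto simp: prob_space_measure_pmf)
    also have "\<dots> = (\<Prod>i<k. ennreal (pmf (pmf_of_set {1..l}) (w i)))"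
      by (simp add: emeasure_pmf_single)
    also have "\<dots> = ennreal (\<Prod>i<k. pmf (pmf_of_set {1..l}) (w i))"
      by (rule prod_ennreal) simp
    also have "\<dots> \<le> ennreal (\<Prod>i<k. 1 / real l)"
    proof (rule ennreal_leI, rule prod_mono)
      fix i assume "i \<in> {..<k}"
      have "pmf (pmf_of_set {1..l}) (w i) = indicator {1..l} (w i) / real l"
        using assms by (subst pmf_of_set) auto
      also have "\<dots> \<le> 1 / real l" by (intro divide_right_mono) (auto simp: indicator_def)
      finally show "0 \<le> pmf (pmf_of_set {1..l}) (w i) \<and> pmf (pmf_of_set {1..l}) (w i) \<le> 1 / real l"
        by simp
    qed
    also have "\<dots> = ennreal ((1 / real l) ^ k)" by simp
    finally show "emeasure (word_measure l) (Pair w -` Aset k) \<le> ennreal ((1 / real l) ^ k)" .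
  qed
  also have "\<dots> = ennreal ((1 / real l) ^ k)"
    using W.emeasure_space_1 by (simp add: nn_integral_const)
  finally show ?thesis .
qed


lemma diag_AE:
  assumes "l \<ge> 2"
  shows "AE p in word_measure l \<Otimes>\<^sub>M word_measure l. fst p \<noteq> snd p"
proof -
  let ?WW = "word_measure l \<Otimes>\<^sub>M word_measure l"
  interpret WW: prob_space ?WW by (rule prob_space_pair[OF prob_W prob_W])
  define N where "N = {p :: (nat\<Rightarrow>nat) \<times> (nat\<Rightarrow>nat). fst p = snd p}"
  have NA: "N = (\<Inter>k\<in>UNIV. Aset k)"
  proof (rule set_eqI)
    fix p :: "(nat\<Rightarrow>nat) \<times> (nat\<Rightarrow>nat)"
    show "p \<in> N \<longleftrightarrow> p \<in> (\<Inter>k\<in>UNIV. Aset k)"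
    proof
      assume "p \<in> N" then show "p \<in> (\<Inter>k\<in>UNIV. Aset k)" by (simp add: N_def Aset_def)
    next
      assume h: "p \<in> (\<Inter>k\<in>UNIV. Aset k)"
      have "fst p i = snd p i" for i
      proof -
        have "p \<in> Aset (Suc i)" using h by blast
        then show ?thesis unfolding Aset_def by simp
      qed
      then show "p \<in> N" unfolding N_def by (simp add: fun_eq_iff)
    qed
  qed
  have "(\<Inter>k\<in>UNIV. Aset k) \<in> sets ?WW" by (rule sets.countable_INT) (auto simp: Aset_sets)
  then have Ns: "N \<in> sets ?WW" unfolding NA .
  have le: "WW.prob N \<le> (1 / real l) ^ k" for k
  proof -
    have "N \<subseteq> Aset k" unfolding NA by blast
    then have "emeasure ?WW N \<le> emeasure ?WW (Aset k)"
      by (rule emeasure_mono[OF _ Aset_sets])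
    also have "\<dots> \<le> ennreal ((1 / real l) ^ k)" using assms by (intro Aset_bound) auto
    finally have "ennreal (WW.prob N) \<le> ennreal ((1 / real l) ^ k)" by (simp only: WW.emeasure_eq_measure)
    then show ?thesis by (rule ennreal_le_iff[THEN iffD1, rotated]) simp
  qed
  have "WW.prob N = 0"
  proof (rule ccontr)
    assume "WW.prob N \<noteq> 0"
    then have "0 < WW.prob N" using measure_nonneg[of ?WW N] by linarith
    moreover have "1 / real l < 1" using assms by simp
    ultimately obtain k where "(1 / real l) ^ k < WW.prob N" using real_arch_pow_inv by blast
    with le[of k] show False by linarith
  qed
  then have "N \<in> null_sets ?WW" using Ns by (simp add: WW.emeasure_eq_measure null_sets_def)
  moreover have "{p \<in> space ?WW. \<not> fst p \<noteq> snd p} \<subseteq> N" by (auto simp: N_def)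
  ultimately show ?thesis by (rule AE_I')
qed


lemma sq_pair:
  "(\<integral>w. cos (t * bfval lam a w) \<partial>word_measure l)\<^sup>2 + (\<integral>w. sin (t * bfval lam a w) \<partial>word_measure l)\<^sup>2
   = (\<integral>p. cos (t * (bfval lam a (fst p) - bfval lam a (snd p))) \<partial>(word_measure l \<Otimes>\<^sub>M word_measure l))"
proof -
  interpret pair_sigma_finite "word_measure l" "word_measure l"
    by (simp add: pair_sigma_finite_def sf_W)
  have pWW: "prob_space (word_measure l \<Otimes>\<^sub>M word_measure l)" by (rule prob_space_pair[OF prob_W prob_W])
  let ?C = "\<integral>w. cos (t * bfval lam a w) \<partial>word_measure l"
  let ?S = "\<integral>w. sin (t * bfval lam a w) \<partial>word_measure l"
  have ic: "integrable (word_measure l \<Otimes>\<^sub>M word_measure l) (\<lambda>(x, y). cos (t * bfval lam a x) * cos (t * bfval lam a y))"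
    by (rule int_bdd1[OF pWW]) (auto simp: abs_mult intro!: mult_le_one)
  have isn: "integrable (word_measure l \<Otimes>\<^sub>M word_measure l) (\<lambda>(x, y). sin (t * bfval lam a x) * sin (t * bfval lam a y))"
    by (rule int_bdd1[OF pWW]) (auto simp: abs_mult intro!: mult_le_one)
  have cc: "(\<integral>p. (\<lambda>(x, y). cos (t * bfval lam a x) * cos (t * bfval lam a y)) p \<partial>(word_measure l \<Otimes>\<^sub>M word_measure l)) = ?C * ?C"
    using integral_fst[OF ic] by simp
  have ss: "(\<integral>p. (\<lambda>(x, y). sin (t * bfval lam a x) * sin (t * bfval lam a y)) p \<partial>(word_measure l \<Otimes>\<^sub>M word_measure l)) = ?S * ?S"
    using integral_fst[OF isn] by simp
  have "(\<integral>p. cos (t * (bfval lam a (fst p) - bfval lam a (snd p))) \<partial>(word_measure l \<Otimes>\<^sub>M word_measure l))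
      = (\<integral>p. (\<lambda>(x, y). cos (t * bfval lam a x) * cos (t * bfval lam a y)) p
              + (\<lambda>(x, y). sin (t * bfval lam a x) * sin (t * bfval lam a y)) p \<partial>(word_measure l \<Otimes>\<^sub>M word_measure l))"
    by (rule Bochner_Integration.integral_cong[OF refl]) (simp add: split_beta right_diff_distrib cos_diff)
  also have "\<dots> = ?C * ?C + ?S * ?S"
    by (subst Bochner_Integration.integral_add[OF ic isn]) (simp only: cc ss)
  finally show ?thesis unfolding power2_eq_square by (rule sym)
qed


definition Ffun :: "real pmf \<Rightarrow> real \<Rightarrow> real \<Rightarrow> (nat\<Rightarrow>nat) \<times> (nat\<Rightarrow>nat) \<Rightarrow> real" where
  "Ffun eta lam t p = (\<integral>a. cos (t * (bfval lam a (fst p) - bfval lam a (snd p))) \<partial>label_space eta)"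

lemma meas_G:
  "(\<lambda>(p, a). cos (t * (bfval lam a (fst p) - bfval lam a (snd p))))
     \<in> borel_measurable ((word_measure l \<Otimes>\<^sub>M word_measure l) \<Otimes>\<^sub>M label_space eta)"
proof -
  have m1: "(\<lambda>x. bfval lam (snd x) (fst (fst x))) \<in> borel_measurable ((word_measure l \<Otimes>\<^sub>M word_measure l) \<Otimes>\<^sub>M label_space eta)"
    by (rule meas_bfval') measurable
  have m2: "(\<lambda>x. bfval lam (snd x) (snd (fst x))) \<in> borel_measurable ((word_measure l \<Otimes>\<^sub>M word_measure l) \<Otimes>\<^sub>M label_space eta)"
    by (rule meas_bfval') measurable
  show ?thesis unfolding split_beta' using m1 m2 by measurable
qed

lemma meas_F[measurable]: "Ffun eta lam t \<in> borel_measurable (word_measure l \<Otimes>\<^sub>M word_measure l)"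
  unfolding Ffun_def
  by (rule sigma_finite_measure.borel_measurable_lebesgue_integral[OF sf_L]) (rule meas_G)

lemma F_bdd: "\<bar>Ffun eta lam t p\<bar> \<le> 1"
  unfolding Ffun_def by (rule abs_int_le1[OF prob_L]) simp

lemma g_eq:
  "(\<integral>a. (cmod (char (bmu l lam a) t))\<^sup>2 \<partial>label_space eta)
     = (\<integral>p. Ffun eta lam t p \<partial>(word_measure l \<Otimes>\<^sub>M word_measure l))"
proof -
  interpret pair_sigma_finite "word_measure l \<Otimes>\<^sub>M word_measure l" "label_space eta"
    by (simp add: pair_sigma_finite_def sf_L prob_space_imp_sigma_finite prob_space_pair prob_W)
  have "(\<integral>a. (cmod (char (bmu l lam a) t))\<^sup>2 \<partial>label_space eta)
     = (\<integral>a. (\<integral>p. cos (t * (bfval lam a (fst p) - bfval lam a (snd p))) \<partial>(word_measure l \<Otimes>\<^sub>M word_measure l)) \<partial>label_space eta)"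
    by (simp add: cmod_char_bmu sq_pair)
  also have "\<dots> = (\<integral>p. (\<integral>a. cos (t * (bfval lam a (fst p) - bfval lam a (snd p))) \<partial>label_space eta) \<partial>(word_measure l \<Otimes>\<^sub>M word_measure l))"
    by (rule Fubini_integral, rule int_bdd1[OF prob_space_pair[OF prob_space_pair[OF prob_W prob_W] prob_L] meas_G]) (simp add: split_beta)
  finally show ?thesis unfolding Ffun_def .
qed

lemma F_off:
  assumes "fst p \<noteq> snd p" and lam: "0 < lam" "lam < 1" and fin: "finite (set_pmf eta)"
  shows "\<exists>k. p \<in> Aset k \<and> Ffun eta lam t p = (cmod (char (bnu eta lam) (t * lam ^ k)))\<^sup>2"
proof -
  have ex: "\<exists>i. fst p i \<noteq> snd p i" using assms(1) by (auto simp: fun_eq_iff)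
  define k where "k = (LEAST i. fst p i \<noteq> snd p i)"
  have k1: "fst p k \<noteq> snd p k" unfolding k_def by (rule LeastI_ex[OF ex])
  have k2: "\<forall>i<k. fst p i = snd p i" unfolding k_def using not_less_Least by blast
  have "p \<in> Aset k" using k2 by (simp add: Aset_def)
  moreover have "Ffun eta lam t p = (cmod (char (bnu eta lam) (t * lam ^ k)))\<^sup>2"
    unfolding Ffun_def by (rule pair_formula[OF k2 k1 lam fin])
  ultimately show ?thesis by blast
qed

lemma F_nonneg:
  assumes lam: "0 < lam" "lam < 1" and fin: "finite (set_pmf eta)"
  shows "0 \<le> Ffun eta lam t p"
proof (cases "fst p = snd p")
  case True
  then have "Ffun eta lam t p = (\<integral>a. 1 \<partial>label_space eta)" unfolding Ffun_def by simp
  also have "\<dots> = 1" using prob_space.prob_space[OF prob_L] by simp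
  finally show ?thesis by simp
next
  case False
  then show ?thesis using F_off[OF False lam fin, of t] by auto
qed


lemma g_bound:
  assumes l: "l \<ge> 2" and lam: "0 < lam" "lam < 1" and fin: "finite (set_pmf eta)"
  shows "ennreal (\<integral>a. (cmod (char (bmu l lam a) t))\<^sup>2 \<partial>label_space eta)
     \<le> (\<Sum>k. ennreal ((cmod (char (bnu eta lam) (t * lam ^ k)))\<^sup>2 * (1 / real l) ^ k))"
proof -
  let ?WW = "word_measure l \<Otimes>\<^sub>M word_measure l"
  let ?h = "\<lambda>k. (cmod (char (bnu eta lam) (t * lam ^ k)))\<^sup>2"
  have intF: "integrable ?WW (Ffun eta lam t)"
    by (rule int_bdd1[OF prob_space_pair[OF prob_W prob_W] meas_F F_bdd])
  have "ennreal (\<integral>a. (cmod (char (bmu l lam a) t))\<^sup>2 \<partial>label_space eta)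
      = ennreal (\<integral>p. Ffun eta lam t p \<partial>?WW)" by (simp only: g_eq)
  also have "\<dots> = (\<integral>\<^sup>+p. ennreal (Ffun eta lam t p) \<partial>?WW)"
    by (rule nn_integral_eq_integral[symmetric, OF intF]) (simp add: F_nonneg[OF lam fin])
  also have "\<dots> \<le> (\<integral>\<^sup>+p. (\<Sum>k. ennreal (?h k) * indicator (Aset k) p) \<partial>?WW)"
  proof (rule nn_integral_mono_AE)
    show "AE p in ?WW. ennreal (Ffun eta lam t p) \<le> (\<Sum>k. ennreal (?h k) * indicator (Aset k) p)"
      using diag_AE[OF l]
    proof eventually_elim
      case (elim p)
      from F_off[OF elim lam fin, of t] obtain k where k: "p \<in> Aset k" "Ffun eta lam t p = ?h k" by blast
      have "ennreal (Ffun eta lam t p) = ennreal (?h k) * indicator (Aset k) p" using k by simp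
      also have "\<dots> \<le> (\<Sum>k. ennreal (?h k) * indicator (Aset k) p)"
      proof -
        have "(\<Sum>i\<in>{k}. ennreal (?h i) * indicator (Aset i) p) \<le> (\<Sum>i. ennreal (?h i) * indicator (Aset i) p)"
          by (rule sum_le_suminf[OF summableI]) auto
        then show ?thesis by (simp only: sum.insert_if finite.emptyI empty_iff if_False sum.empty add_0_right)
      qed
      finally show ?case .
    qed
  qed
  also have "\<dots> = (\<Sum>k. (\<integral>\<^sup>+p. ennreal (?h k) * indicator (Aset k) p \<partial>?WW))"
    by (rule nn_integral_suminf) (auto intro!: borel_measurable_times_ennreal borel_measurable_indicator Aset_sets)
  also have "\<dots> = (\<Sum>k. ennreal (?h k) * emeasure ?WW (Aset k))"
    by (simp add: nn_integral_cmult_indicator Aset_sets)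
  also have "\<dots> \<le> (\<Sum>k. ennreal (?h k) * ennreal ((1 / real l) ^ k))"
    by (intro suminf_le summableI mult_left_mono Aset_bound) (use l in auto)
  also have "\<dots> = (\<Sum>k. ennreal (?h k * (1 / real l) ^ k))"
    by (simp add: ennreal_mult)
  finally show ?thesis .
qed


lemma rd_bnu: "real_distribution (bnu eta lam)"
  by (simp add: real_distribution_def real_distribution_axioms_def prob_bnu[unfolded bnu_Sf] bnu_Sf)

lemma rd_bmu: "real_distribution (bmu l lam a)"
proof -
  have "prob_space (bmu l lam a)" unfolding bmu_def
    by (rule prob_space.prob_space_distr[OF prob_W meas_bfval_w])
  then show ?thesis by (simp add: real_distribution_def real_distribution_axioms_def bmu_def)
qed

lemma meas_hq_real[measurable]:
  "(\<lambda>x. (cmod (char (bnu eta lam) (x * c)))\<^sup>2 * \<bar>x\<bar> powr (2 * \<gamma>)) \<in> borel_measurable borel"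
proof -
  have [measurable]: "char (bnu eta lam) \<in> borel_measurable borel"
    by (rule real_distribution.char_measurable[OF rd_bnu])
  show ?thesis by measurable
qed

lemma meas_hq[measurable]:
  "(\<lambda>x. ennreal ((cmod (char (bnu eta lam) (x * c)))\<^sup>2 * \<bar>x\<bar> powr (2 * \<gamma>))) \<in> borel_measurable borel"
proof -
  have [measurable]: "char (bnu eta lam) \<in> borel_measurable borel"
    by (rule real_distribution.char_measurable[OF rd_bnu])
  show ?thesis by measurable
qed

lemma scale_int:
  assumes c: "c > 0"
  shows "(\<integral>\<^sup>+x. ennreal ((cmod (char (bnu eta lam) (x * c)))\<^sup>2 * \<bar>x\<bar> powr (2 * \<gamma>)) \<partial>lborel)
     = ennreal (1 / (c * c powr (2 * \<gamma>))) * (\<integral>\<^sup>+s. ennreal ((cmod (char (bnu eta lam) s))\<^sup>2 * \<bar>s\<bar> powr (2 * \<gamma>)) \<partial>lborel)"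
proof -
  let ?f = "\<lambda>s. ennreal ((cmod (char (bnu eta lam) s))\<^sup>2 * \<bar>s\<bar> powr (2 * \<gamma>))"
  let ?J = "\<integral>\<^sup>+x. ennreal ((cmod (char (bnu eta lam) (x * c)))\<^sup>2 * \<bar>x\<bar> powr (2 * \<gamma>)) \<partial>lborel"
  define d where "d = c * c powr (2 * \<gamma>)"
  have d: "d > 0" unfolding d_def using c by simp
  have mf: "?f \<in> borel_measurable borel" using meas_hq[of eta lam 1 \<gamma>] by simp
  have "(\<integral>\<^sup>+s. ?f s \<partial>lborel) = ennreal \<bar>c\<bar> * (\<integral>\<^sup>+x. ?f (0 + c * x) \<partial>lborel)"
    by (rule nn_integral_real_affine[OF mf]) (use c in simp)
  also have "(\<integral>\<^sup>+x. ?f (0 + c * x) \<partial>lborel) = (\<integral>\<^sup>+x. ennreal (c powr (2 * \<gamma>)) * ennreal ((cmod (char (bnu eta lam) (x * c)))\<^sup>2 * \<bar>x\<bar> powr (2 * \<gamma>)) \<partial>lborel)"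
  proof (rule nn_integral_cong)
    fix x :: real
    have "\<bar>c * x\<bar> powr (2 * \<gamma>) = c powr (2 * \<gamma>) * \<bar>x\<bar> powr (2 * \<gamma>)"
      using c by (simp add: abs_mult powr_mult)
    then have "(cmod (char (bnu eta lam) (c * x)))\<^sup>2 * \<bar>c * x\<bar> powr (2 * \<gamma>)
        = c powr (2 * \<gamma>) * ((cmod (char (bnu eta lam) (x * c)))\<^sup>2 * \<bar>x\<bar> powr (2 * \<gamma>))"
      by (simp add: mult.commute mult.left_commute)
    then show "?f (0 + c * x) = ennreal (c powr (2 * \<gamma>)) * ennreal ((cmod (char (bnu eta lam) (x * c)))\<^sup>2 * \<bar>x\<bar> powr (2 * \<gamma>))"
      by (simp add: ennreal_mult)
  qed
  also have "\<dots> = ennreal (c powr (2 * \<gamma>)) * ?J"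
    by (rule nn_integral_cmult) (subst measurable_cong_sets[OF sets_lborel refl], rule meas_hq)
  finally have X: "(\<integral>\<^sup>+s. ?f s \<partial>lborel) = ennreal d * ?J"
    unfolding d_def using c by (simp add: ennreal_mult mult.assoc)
  have "ennreal (1 / d) * (\<integral>\<^sup>+s. ?f s \<partial>lborel) = (ennreal (1 / d) * ennreal d) * ?J"
    unfolding X by (simp add: mult.assoc)
  also have "ennreal (1 / d) * ennreal d = 1"
    using d by (simp add: ennreal_mult[symmetric])
  finally show ?thesis unfolding d_def by simp
qed


lemma meas_CS2:
  "(\<lambda>x. \<integral>w. cos (snd x * bfval lam (fst x) w) \<partial>word_measure l) \<in> borel_measurable (label_space eta \<Otimes>\<^sub>M lborel)"
  "(\<lambda>x. \<integral>w. sin (snd x * bfval lam (fst x) w) \<partial>word_measure l) \<in> borel_measurable (label_space eta \<Otimes>\<^sub>M lborel)"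
proof -
  have m: "(\<lambda>y. bfval lam (fst (fst y)) (snd y)) \<in> borel_measurable ((label_space eta \<Otimes>\<^sub>M lborel) \<Otimes>\<^sub>M word_measure l)"
    by (rule meas_bfval') measurable
  show "(\<lambda>x. \<integral>w. cos (snd x * bfval lam (fst x) w) \<partial>word_measure l) \<in> borel_measurable (label_space eta \<Otimes>\<^sub>M lborel)"
    by (rule sigma_finite_measure.borel_measurable_lebesgue_integral[OF sf_W]) (unfold split_beta', use m in measurable)
  show "(\<lambda>x. \<integral>w. sin (snd x * bfval lam (fst x) w) \<partial>word_measure l) \<in> borel_measurable (label_space eta \<Otimes>\<^sub>M lborel)"
    by (rule sigma_finite_measure.borel_measurable_lebesgue_integral[OF sf_W]) (unfold split_beta', use m in measurable)
qed

lemma powr_lam_k: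
  fixes lam :: real
  assumes "0 < lam"
  shows "lam ^ k * (lam ^ k) powr (2 * \<gamma>) = (lam powr (1 + 2 * \<gamma>)) ^ k"
proof -
  have "lam ^ k = lam powr real k" using assms by (simp add: powr_realpow)
  then have "lam ^ k * (lam ^ k) powr (2 * \<gamma>) = lam powr (real k) * lam powr (real k * (2 * \<gamma>))"
    by (simp add: powr_powr)
  also have "\<dots> = lam powr (real k * (1 + 2 * \<gamma>))" by (simp add: powr_add[symmetric] algebra_simps)
  also have "\<dots> = (lam powr (1 + 2 * \<gamma>)) ^ k" using assms by (simp add: powr_power)
  finally show ?thesis .
qed


lemma part_ii:
  assumes l: "l \<ge> 2" and lam: "0 < lam" "lam < 1" and fin: "finite (set_pmf eta)"
    and g: "\<gamma> \<ge> 0" "lam powr (1 + 2 * \<gamma>) > 1 / real l"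
  shows "\<exists>C1 C2 :: real.
               (\<integral>\<^sup>+ a. (\<integral>\<^sup>+ t. ennreal ((cmod (char (bmu l lam a) t))\<^sup>2 * \<bar>t\<bar> powr (2 * \<gamma>)) \<partial>lborel)
                   \<partial>label_space eta)
               \<le> ennreal C1 + ennreal C2 *
                  (\<integral>\<^sup>+ t. ennreal ((cmod (char (bnu eta lam) t))\<^sup>2 * \<bar>t\<bar> powr (2 * \<gamma>)) \<partial>lborel)"
proof -
  let ?X = "\<integral>\<^sup>+ t. ennreal ((cmod (char (bnu eta lam) t))\<^sup>2 * \<bar>t\<bar> powr (2 * \<gamma>)) \<partial>lborel"
  let ?q = "\<lambda>t::real. \<bar>t\<bar> powr (2 * \<gamma>)"
  let ?C = "\<lambda>x. \<integral>w. cos (snd x * bfval lam (fst x) w) \<partial>word_measure l"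
  let ?S = "\<lambda>x. \<integral>w. sin (snd x * bfval lam (fst x) w) \<partial>word_measure l"
  let ?h = "\<lambda>k t. (cmod (char (bnu eta lam) (t * lam ^ k)))\<^sup>2"
  define r where "r = 1 / (real l * lam powr (1 + 2 * \<gamma>))"
  have lp: "lam powr (1 + 2 * \<gamma>) > 0" using lam by simp
  have r0: "0 \<le> r" unfolding r_def using lp by simp
  have r1: "r < 1"
  proof -
    have "1 < real l * lam powr (1 + 2 * \<gamma>)" using g(2) l by (simp add: field_simps)
    then show ?thesis unfolding r_def by simp
  qed
  interpret LB: pair_sigma_finite "label_space eta" lborel
    by (simp add: pair_sigma_finite_def sf_L lborel.sigma_finite_measure_axioms)
  have mC: "?C \<in> borel_measurable (label_space eta \<Otimes>\<^sub>M lborel)" by (rule meas_CS2)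
  have mS: "?S \<in> borel_measurable (label_space eta \<Otimes>\<^sub>M lborel)" by (rule meas_CS2)
  have mq: "(\<lambda>x::(nat list \<Rightarrow> real) \<times> real. ?q (snd x)) \<in> borel_measurable (label_space eta \<Otimes>\<^sub>M lborel)"
    by measurable
  have mPhi: "(\<lambda>x. ennreal (((?C x)\<^sup>2 + (?S x)\<^sup>2) * ?q (snd x))) \<in> borel_measurable (label_space eta \<Otimes>\<^sub>M lborel)"
    using mC mS mq by measurable
  have "(\<integral>\<^sup>+ a. (\<integral>\<^sup>+ t. ennreal ((cmod (char (bmu l lam a) t))\<^sup>2 * ?q t) \<partial>lborel) \<partial>label_space eta)
      = (\<integral>\<^sup>+ a. (\<integral>\<^sup>+ t. ennreal (((?C (a, t))\<^sup>2 + (?S (a, t))\<^sup>2) * ?q (snd (a, t))) \<partial>lborel) \<partial>label_space eta)"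
    by (simp add: cmod_char_bmu)
  also have "\<dots> = (\<integral>\<^sup>+ t. (\<integral>\<^sup>+ a. ennreal (((?C (a, t))\<^sup>2 + (?S (a, t))\<^sup>2) * ?q (snd (a, t))) \<partial>label_space eta) \<partial>lborel)"
  proof -
    have mPhi': "(\<lambda>(a, t). ennreal (((?C (a, t))\<^sup>2 + (?S (a, t))\<^sup>2) * ?q (snd (a, t)))) \<in> borel_measurable (label_space eta \<Otimes>\<^sub>M lborel)"
      using mPhi by (simp add: split_beta')
    show ?thesis using LB.Fubini'[OF mPhi'] by simp
  qed
  also have "\<dots> \<le> (\<integral>\<^sup>+ t. (\<Sum>k. ennreal ((1 / real l) ^ k) * ennreal (?h k t * ?q t)) \<partial>lborel)"
  proof (rule nn_integral_mono)
    fix t :: real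
    have bnd: "\<bar>((?C (a, t))\<^sup>2 + (?S (a, t))\<^sup>2) * ?q t\<bar> \<le> ?q t" for a
    proof -
      have "(?C (a, t))\<^sup>2 + (?S (a, t))\<^sup>2 = (cmod (char (bmu l lam a) t))\<^sup>2" by (simp add: cmod_char_bmu)
      moreover have "(cmod (char (bmu l lam a) t))\<^sup>2 \<le> 1"
      proof -
        have "cmod (char (bmu l lam a) t) \<le> 1"
          by (rule real_distribution.cmod_char_le_1[OF rd_bmu])
        then show ?thesis by (simp add: abs_square_le_1)
      qed
      ultimately show ?thesis by (simp add: abs_mult) (rule mult_left_le_one_le, simp_all)
    qed
    have mA: "(\<lambda>a. ((?C (a, t))\<^sup>2 + (?S (a, t))\<^sup>2) * ?q t) \<in> borel_measurable (label_space eta)"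
      using meas_C[where t=t and lam=lam and l=l and eta=eta] meas_Sn[where t=t and lam=lam and l=l and eta=eta] by simp
    have intA: "integrable (label_space eta) (\<lambda>a. ((?C (a, t))\<^sup>2 + (?S (a, t))\<^sup>2) * ?q t)"
      by (rule finite_measure.integrable_const_bound[OF prob_space.finite_measure[OF prob_L] _ mA, where B="?q t"])
         (use bnd in simp)
    have "(\<integral>\<^sup>+ a. ennreal (((?C (a, t))\<^sup>2 + (?S (a, t))\<^sup>2) * ?q (snd (a, t))) \<partial>label_space eta)
        = ennreal (\<integral>a. ((?C (a, t))\<^sup>2 + (?S (a, t))\<^sup>2) * ?q t \<partial>label_space eta)"
    proof -
      have nn: "AE a in label_space eta. 0 \<le> ((?C (a, t))\<^sup>2 + (?S (a, t))\<^sup>2) * ?q t" by (intro AE_I2) simp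
      show ?thesis using nn_integral_eq_integral[OF intA nn] by simp
    qed
    also have "\<dots> = ennreal ((\<integral>a. (cmod (char (bmu l lam a) t))\<^sup>2 \<partial>label_space eta) * ?q t)"
      by (simp add: cmod_char_bmu)
    also have "\<dots> = ennreal (\<integral>a. (cmod (char (bmu l lam a) t))\<^sup>2 \<partial>label_space eta) * ennreal (?q t)"
      by (rule ennreal_mult'') simp
    also have "\<dots> \<le> (\<Sum>k. ennreal (?h k t * (1 / real l) ^ k)) * ennreal (?q t)"
      by (rule mult_right_mono[OF g_bound[OF l lam fin]]) simp
    also have "\<dots> = (\<Sum>k. ennreal (?h k t * (1 / real l) ^ k) * ennreal (?q t))"
      by (rule ennreal_suminf_multc[symmetric])
    also have "\<dots> = (\<Sum>k. ennreal ((1 / real l) ^ k) * ennreal (?h k t * ?q t))"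
    proof (rule suminf_cong)
      fix k
      have "ennreal (?h k t * (1 / real l) ^ k) * ennreal (?q t) = ennreal (?h k t * (1 / real l) ^ k * ?q t)"
        by (rule ennreal_mult[symmetric]) simp_all
      also have "\<dots> = ennreal ((1 / real l) ^ k * (?h k t * ?q t))" by (simp only: mult_ac)
      also have "\<dots> = ennreal ((1 / real l) ^ k) * ennreal (?h k t * ?q t)"
        by (rule ennreal_mult) simp_all
      finally show "ennreal (?h k t * (1 / real l) ^ k) * ennreal (?q t) = ennreal ((1 / real l) ^ k) * ennreal (?h k t * ?q t)" .
    qed
    finally show "(\<integral>\<^sup>+ a. ennreal (((?C (a, t))\<^sup>2 + (?S (a, t))\<^sup>2) * ?q (snd (a, t))) \<partial>label_space eta)
        \<le> (\<Sum>k. ennreal ((1 / real l) ^ k) * ennreal (?h k t * ?q t))" .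
  qed
  also have "\<dots> = (\<Sum>k. (\<integral>\<^sup>+ t. ennreal ((1 / real l) ^ k) * ennreal (?h k t * ?q t) \<partial>lborel))"
    by (rule nn_integral_suminf) (auto intro!: borel_measurable_times_ennreal meas_hq_real simp: measurable_cong_sets[OF sets_lborel refl])
  also have "\<dots> = (\<Sum>k. ennreal ((1 / real l) ^ k) * (\<integral>\<^sup>+ t. ennreal (?h k t * ?q t) \<partial>lborel))"
    by (subst nn_integral_cmult) (auto intro: meas_hq simp: measurable_cong_sets[OF sets_lborel refl])
  also have "\<dots> = (\<Sum>k. ennreal ((1 / real l) ^ k) * (ennreal (1 / (lam ^ k * (lam ^ k) powr (2 * \<gamma>))) * ?X))"
    using lam by (simp add: scale_int)
  also have "\<dots> = (\<Sum>k. ennreal (r ^ k) * ?X)"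
  proof (rule suminf_cong)
    fix k
    have "(1 / real l) ^ k * (1 / (lam ^ k * (lam ^ k) powr (2 * \<gamma>))) = r ^ k"
      unfolding powr_lam_k[OF lam(1)] r_def by (simp add: power_divide power_mult_distrib)
    then have e2: "ennreal ((1 / real l) ^ k) * ennreal (1 / (lam ^ k * (lam ^ k) powr (2 * \<gamma>))) = ennreal (r ^ k)"
      by (subst ennreal_mult[symmetric]) (use lam in simp_all)
    show "ennreal ((1 / real l) ^ k) * (ennreal (1 / (lam ^ k * (lam ^ k) powr (2 * \<gamma>))) * ?X) = ennreal (r ^ k) * ?X"
      by (simp only: mult.assoc[symmetric] e2)
  qed
  also have "\<dots> = ennreal (\<Sum>k. r ^ k) * ?X"
    using r0 r1 by (simp add: suminf_ennreal2 summable_geometric)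
  also have "\<dots> = ennreal 0 + ennreal (\<Sum>k. r ^ k) * ?X" by simp
  finally show ?thesis by blast
qed


theorem theorem1p1:
  fixes l :: nat and lam :: real and eta :: "real pmf"
  assumes "l \<ge> 2" and "0 < lam" and "lam < 1" and "finite (set_pmf eta)"
  shows "(\<forall>t::real.
            (\<integral>a. (cmod (char (bmu l lam a) t))\<^sup>2 \<partial>label_space eta)
              \<ge> (cmod (char (bnu eta lam) t))\<^sup>2)
       \<and> (\<forall>\<gamma>::real. \<gamma> \<ge> 0 \<and> lam powr (1 + 2 * \<gamma>) > 1 / real l \<longrightarrow>
            (\<exists>C1 C2 :: real.
               (\<integral>\<^sup>+ a. (\<integral>\<^sup>+ t. ennreal ((cmod (char (bmu l lam a) t))\<^sup>2 * \<bar>t\<bar> powr (2 * \<gamma>)) \<partial>lborel)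
                   \<partial>label_space eta)
               \<le> ennreal C1 + ennreal C2 *
                  (\<integral>\<^sup>+ t. ennreal ((cmod (char (bnu eta lam) t))\<^sup>2 * \<bar>t\<bar> powr (2 * \<gamma>)) \<partial>lborel)))"
proof (intro conjI allI impI)
  fix t :: real
  show "(\<integral>a. (cmod (char (bmu l lam a) t))\<^sup>2 \<partial>label_space eta) \<ge> (cmod (char (bnu eta lam) t))\<^sup>2"
    by (rule part_i)
next
  fix \<gamma> :: real
  assume "\<gamma> \<ge> 0 \<and> lam powr (1 + 2 * \<gamma>) > 1 / real l"
  then show "\<exists>C1 C2 :: real.
               (\<integral>\<^sup>+ a. (\<integral>\<^sup>+ t. ennreal ((cmod (char (bmu l lam a) t))\<^sup>2 * \<bar>t\<bar> powr (2 * \<gamma>)) \<partial>lborel)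
                   \<partial>label_space eta)
               \<le> ennreal C1 + ennreal C2 *
                  (\<integral>\<^sup>+ t. ennreal ((cmod (char (bnu eta lam) t))\<^sup>2 * \<bar>t\<bar> powr (2 * \<gamma>)) \<partial>lborel)"
    using part_ii[OF assms] by blast
qed

end
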